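(* Let $\mathcal G$ be a braided stability groupoid and let $V\colon U\mathcal G\to\mathcal D$ be a functor, where $\mathcal D=\mathrm{Set}$ or $\mathcal D=R\text{-Mod}$ for a ring $R$. Then $V$ is generated in ranks $\le d$ if and only if the map $(\Sigma V)_n\to V_n$ induced by $\iota_1\in\mathrm{Hom}(0,1)$ is surjective for all $n>d$.
   Context: Stability groupoid: monoidal groupoid $(\mathcal G,\oplus,0)$ with objects $(\mathbb N,+,0)$, $G_n=\mathrm{Aut}(n)$, $\oplus\colon G_m\times G_n\to G_{m+n}$ injective, $G_0$ trivial, $(G_{l+m}\times1)\cap(1\times G_{m+n})=1\times G_m\times1$; braided: with braiding $b_{m,n}\in G_{m+n}$. $U\mathcal G$: objects $\mathbb N$, $\mathrm{Hom}(m,n)=G_n/G_{n-m}$ for $m\le n$ ($G_{n-m}\subset G_n$ via $g\mapsto g\oplus\mathrm{id}_m$), empty otherwise, composition $fG_l\circ gG_m=f(\mathrm{id}_l\oplus g)G_{l+m}$, monoidal via $f_1G_{m_1}\oplus f_2G_{m_2}=(f_1\oplus f_2)(\mathrm{id}_{m_1}\oplus b^{-1}_{n_1,m_2}\oplus\mathrm{id}_{n_2})G_{m_1+m_2}$; $0$ initial, $\iota_n\colon0\to n$. $V_n=V(n)$. $\Sigma$ is the left adjoint of $V\mapsto V(-\oplus1)$; concretely $(\Sigma V)_n\cong G_n\times_{G_{n-1}}V_{n-1}$ (sets) or $RG_n\otimes_{RG_{n-1}}V_{n-1}$ (modules), $G_{n-1}\subset G_n$ via $g\mapsto g\oplus\mathrm{id}_1$,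 and the map induced by $\iota_1$ is $[g,x]\mapsto g\cdot V(\mathrm{id}_{n-1}\oplus\iota_1)(x)$ (resp. $g\otimes x\mapsto g\cdot V(\mathrm{id}_{n-1}\oplus\iota_1)(x)$). A $U\mathcal G$-set (resp. module) $V$ is generated in ranks $\le m$ if there is an epimorphism onto $V$ from a disjoint union $\coprod_j\mathrm{Hom}(m_j,-)$ (resp. a direct sum $\bigoplus_jR\mathrm{Hom}(m_j,-)$) with all $m_j\le m$. *)

theory Defs
  imports "HOL-Algebra.Module" "HOL-Algebra.Coset"
begin

text \<open>
A (strict) monoidal groupoid with objects (nat,+,0) is encoded by the family of
automorphism groups G n = Aut(n) (all with a common element type 'g) together with
the monoidal product on morphisms oplus m n : G m x G n -> G (m+n).
\<close>

definition stability_groupoid ::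
  "(nat \<Rightarrow> 'g monoid) \<Rightarrow> (nat \<Rightarrow> nat \<Rightarrow> 'g \<Rightarrow> 'g \<Rightarrow> 'g) \<Rightarrow> bool" where
  "stability_groupoid G oplus \<longleftrightarrow>
     (\<forall>n. group (G n))
   \<and> (\<forall>m n g h. g \<in> carrier (G m) \<longrightarrow> h \<in> carrier (G n) \<longrightarrow>
        oplus m n g h \<in> carrier (G (m + n)))
   \<and> (\<forall>m n g g' h h'. g \<in> carrier (G m) \<longrightarrow> g' \<in> carrier (G m) \<longrightarrow>
        h \<in> carrier (G n) \<longrightarrow> h' \<in> carrier (G n) \<longrightarrow>
        oplus m n (g \<otimes>\<^bsub>G m\<^esub> g') (h \<otimes>\<^bsub>G n\<^esub> h')
          = oplus m n g h \<otimes>\<^bsub>G (m + n)\<^esub> oplus m n g' h')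
   \<and> (\<forall>m n. oplus m n \<one>\<^bsub>G m\<^esub> \<one>\<^bsub>G n\<^esub> = \<one>\<^bsub>G (m + n)\<^esub>)
   \<and> (\<forall>l m n g h k. g \<in> carrier (G l) \<longrightarrow> h \<in> carrier (G m) \<longrightarrow> k \<in> carrier (G n) \<longrightarrow>
        oplus (l + m) n (oplus l m g h) k = oplus l (m + n) g (oplus m n h k))
   \<and> (\<forall>n h. h \<in> carrier (G n) \<longrightarrow> oplus 0 n \<one>\<^bsub>G 0\<^esub> h = h \<and> oplus n 0 h \<one>\<^bsub>G 0\<^esub> = h)
   \<and> carrier (G 0) = {\<one>\<^bsub>G 0\<^esub>}
   \<and> (\<forall>m n. inj_on (\<lambda>(g, h). oplus m n g h) (carrier (G m) \<times> carrier (G n)))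
   \<and> (\<forall>l m n.
        (\<lambda>g. oplus (l + m) n g \<one>\<^bsub>G n\<^esub>) ` carrier (G (l + m))
        \<inter> (\<lambda>h. oplus l (m + n) \<one>\<^bsub>G l\<^esub> h) ` carrier (G (m + n))
        = (\<lambda>g. oplus l (m + n) \<one>\<^bsub>G l\<^esub> (oplus m n g \<one>\<^bsub>G n\<^esub>)) ` carrier (G m))"

text \<open>Braiding b m n : m + n -> n + m, an element of G (m+n); naturality and the two
hexagon axioms (composition in a group written as f \<otimes> g = f after g).\<close>

definition braided_stability_groupoid ::
  "(nat \<Rightarrow> 'g monoid) \<Rightarrow> (nat \<Rightarrow> nat \<Rightarrow> 'g \<Rightarrow> 'g \<Rightarrow> 'g) \<Rightarrow> (nat \<Rightarrow> nat \<Rightarrow> 'g) \<Rightarrow> bool" where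
  "braided_stability_groupoid G oplus b \<longleftrightarrow>
     stability_groupoid G oplus
   \<and> (\<forall>m n. b m n \<in> carrier (G (m + n)))
   \<and> (\<forall>m n g h. g \<in> carrier (G m) \<longrightarrow> h \<in> carrier (G n) \<longrightarrow>
        b m n \<otimes>\<^bsub>G (m + n)\<^esub> oplus m n g h = oplus n m h g \<otimes>\<^bsub>G (m + n)\<^esub> b m n)
   \<and> (\<forall>l m n. b l (m + n)
        = oplus m (n + l) \<one>\<^bsub>G m\<^esub> (b l n) \<otimes>\<^bsub>G (l + m + n)\<^esub> oplus (l + m) n (b l m) \<one>\<^bsub>G n\<^esub>)
   \<and> (\<forall>l m n. b (l + m) n
        = oplus (n + l) m (b l n) \<one>\<^bsub>G m\<^esub> \<otimes>\<^bsub>G (l + m + n)\<^esub> oplus l (m + n) \<one>\<^bsub>G l\<^esub> (b m n))"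

definition sub_grp :: "(nat \<Rightarrow> 'g monoid) \<Rightarrow> (nat \<Rightarrow> nat \<Rightarrow> 'g \<Rightarrow> 'g \<Rightarrow> 'g) \<Rightarrow> nat \<Rightarrow> nat \<Rightarrow> 'g set" where
  "sub_grp G oplus k n = (\<lambda>g. oplus (n - k) k g \<one>\<^bsub>G k\<^esub>) ` carrier (G (n - k))"

text \<open>The morphism f G_{n-k} in Hom(k,n) represented by f \<in> G n.\<close>
definition umor :: "(nat \<Rightarrow> 'g monoid) \<Rightarrow> (nat \<Rightarrow> nat \<Rightarrow> 'g \<Rightarrow> 'g \<Rightarrow> 'g) \<Rightarrow> nat \<Rightarrow> nat \<Rightarrow> 'g \<Rightarrow> 'g set" where
  "umor G oplus k n f = f <#\<^bsub>G n\<^esub> sub_grp G oplus k n"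

definition uhom :: "(nat \<Rightarrow> 'g monoid) \<Rightarrow> (nat \<Rightarrow> nat \<Rightarrow> 'g \<Rightarrow> 'g \<Rightarrow> 'g) \<Rightarrow> nat \<Rightarrow> nat \<Rightarrow> 'g set set" where
  "uhom G oplus k n = (if k \<le> n then umor G oplus k n ` carrier (G n) else {})"

text \<open>Monoidal product of morphisms f1 G_{m1} : n1 -> m1+n1 and f2 G_{m2} : n2 -> m2+n2:
(f1 \<oplus> f2)(id_{m1} \<oplus> b^{-1}_{n1,m2} \<oplus> id_{n2}) G_{m1+m2}.\<close>
definition uoplus ::
  "(nat \<Rightarrow> 'g monoid) \<Rightarrow> (nat \<Rightarrow> nat \<Rightarrow> 'g \<Rightarrow> 'g \<Rightarrow> 'g) \<Rightarrow> (nat \<Rightarrow> nat \<Rightarrow> 'g) \<Rightarrow>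
   nat \<Rightarrow> nat \<Rightarrow> nat \<Rightarrow> nat \<Rightarrow> 'g \<Rightarrow> 'g \<Rightarrow> 'g set" where
  "uoplus G oplus b n1 m1 n2 m2 f1 f2 =
     umor G oplus (n1 + n2) (m1 + n1 + (m2 + n2))
       (oplus (m1 + n1) (m2 + n2) f1 f2 \<otimes>\<^bsub>G (m1 + n1 + (m2 + n2))\<^esub>
        oplus m1 (n1 + m2 + n2) \<one>\<^bsub>G m1\<^esub>
          (oplus (n1 + m2) n2 (inv\<^bsub>G (n1 + m2)\<^esub> (b n1 m2)) \<one>\<^bsub>G n2\<^esub>))"

text \<open>The morphism id_{n-1} \<oplus> \<iota>_1 : n-1 -> n, where id_{n-1} = 1 G_0 and \<iota>_1 = 1 G_1.\<close>
definition id_oplus_iota1 ::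
  "(nat \<Rightarrow> 'g monoid) \<Rightarrow> (nat \<Rightarrow> nat \<Rightarrow> 'g \<Rightarrow> 'g \<Rightarrow> 'g) \<Rightarrow> (nat \<Rightarrow> nat \<Rightarrow> 'g) \<Rightarrow> nat \<Rightarrow> 'g set" where
  "id_oplus_iota1 G oplus b n = uoplus G oplus b (n - 1) 0 0 1 \<one>\<^bsub>G (n - 1)\<^esub> \<one>\<^bsub>G 1\<^esub>"

definition set_functor ::
  "(nat \<Rightarrow> 'g monoid) \<Rightarrow> (nat \<Rightarrow> nat \<Rightarrow> 'g \<Rightarrow> 'g \<Rightarrow> 'g) \<Rightarrow>
   (nat \<Rightarrow> 'a set) \<Rightarrow> (nat \<Rightarrow> nat \<Rightarrow> 'g set \<Rightarrow> 'a \<Rightarrow> 'a) \<Rightarrow> bool" where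
  "set_functor G oplus V F \<longleftrightarrow>
     (\<forall>k n C x. C \<in> uhom G oplus k n \<longrightarrow> x \<in> V k \<longrightarrow> F k n C x \<in> V n)
   \<and> (\<forall>n x. x \<in> V n \<longrightarrow> F n n (umor G oplus n n \<one>\<^bsub>G n\<^esub>) x = x)
   \<and> (\<forall>k n p f g x. k \<le> n \<longrightarrow> n \<le> p \<longrightarrow> f \<in> carrier (G p) \<longrightarrow> g \<in> carrier (G n) \<longrightarrow> x \<in> V k \<longrightarrow>
        F n p (umor G oplus n p f) (F k n (umor G oplus k n g) x)
        = F k p (umor G oplus k p (f \<otimes>\<^bsub>G p\<^esub> oplus (p - n) n \<one>\<^bsub>G (p - n)\<^esub> g)) x)"

text \<open>Basis of the coproduct of representables \<coprod>_{j \<in> J} Hom(mj j, -) in rank n.\<close>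
definition rep_basis ::
  "(nat \<Rightarrow> 'g monoid) \<Rightarrow> (nat \<Rightarrow> nat \<Rightarrow> 'g \<Rightarrow> 'g \<Rightarrow> 'g) \<Rightarrow> 'j set \<Rightarrow> ('j \<Rightarrow> nat) \<Rightarrow> nat \<Rightarrow> ('j \<times> 'g set) set" where
  "rep_basis G oplus J mj n = {(j, C). j \<in> J \<and> C \<in> uhom G oplus (mj j) n}"

text \<open>Naturality of \<eta> : \<coprod>_{j \<in> J} Hom(mj j, -) \<Rightarrow> V (on basis elements).\<close>
definition rep_nat ::
  "(nat \<Rightarrow> 'g monoid) \<Rightarrow> (nat \<Rightarrow> nat \<Rightarrow> 'g \<Rightarrow> 'g \<Rightarrow> 'g) \<Rightarrow> 'j set \<Rightarrow> ('j \<Rightarrow> nat) \<Rightarrow>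
   (nat \<Rightarrow> 'a set) \<Rightarrow> (nat \<Rightarrow> nat \<Rightarrow> 'g set \<Rightarrow> 'a \<Rightarrow> 'a) \<Rightarrow> (nat \<Rightarrow> 'j \<times> 'g set \<Rightarrow> 'a) \<Rightarrow> bool" where
  "rep_nat G oplus J mj V F \<eta> \<longleftrightarrow>
     (\<forall>n. \<eta> n ` rep_basis G oplus J mj n \<subseteq> V n)
   \<and> (\<forall>j n p f g. j \<in> J \<longrightarrow> mj j \<le> n \<longrightarrow> n \<le> p \<longrightarrow> f \<in> carrier (G p) \<longrightarrow> g \<in> carrier (G n) \<longrightarrow>
        \<eta> p (j, umor G oplus (mj j) p (f \<otimes>\<^bsub>G p\<^esub> oplus (p - n) n \<one>\<^bsub>G (p - n)\<^esub> g))
        = F n p (umor G oplus n p f) (\<eta> n (j, umor G oplus (mj j) n g)))"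

text \<open>Generated in ranks \<le> d: an epimorphism (= levelwise surjective natural transformation)
onto V from a disjoint union of representables Hom(m_j,-), m_j \<le> d.  The index set is
taken inside the type nat \<times> 'a, which is large enough (at most |\<coprod>_n V n| generators are ever
needed).\<close>
definition set_generated_le ::
  "(nat \<Rightarrow> 'g monoid) \<Rightarrow> (nat \<Rightarrow> nat \<Rightarrow> 'g \<Rightarrow> 'g \<Rightarrow> 'g) \<Rightarrow>
   (nat \<Rightarrow> 'a set) \<Rightarrow> (nat \<Rightarrow> nat \<Rightarrow> 'g set \<Rightarrow> 'a \<Rightarrow> 'a) \<Rightarrow> nat \<Rightarrow> bool" where
  "set_generated_le G oplus V F d \<longleftrightarrow>
     (\<exists>(J :: (nat \<times> 'a) set) mj \<eta>. (\<forall>j\<in>J. mj j \<le> d) \<and> rep_nat G oplus J mj V F \<eta>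
        \<and> (\<forall>n. V n \<subseteq> \<eta> n ` rep_basis G oplus J mj n))"

text \<open>Image of the map (\<Sigma>V)_n = G_n \<times>_{G_{n-1}} V_{n-1} \<rightarrow> V_n, [g,x] \<mapsto> g \<cdot> V(id_{n-1} \<oplus> \<iota>_1)(x).\<close>
definition set_sigma_image ::
  "(nat \<Rightarrow> 'g monoid) \<Rightarrow> (nat \<Rightarrow> nat \<Rightarrow> 'g \<Rightarrow> 'g \<Rightarrow> 'g) \<Rightarrow> (nat \<Rightarrow> nat \<Rightarrow> 'g) \<Rightarrow>
   (nat \<Rightarrow> 'a set) \<Rightarrow> (nat \<Rightarrow> nat \<Rightarrow> 'g set \<Rightarrow> 'a \<Rightarrow> 'a) \<Rightarrow> nat \<Rightarrow> 'a set" where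
  "set_sigma_image G oplus b V F n =
     {F n n (umor G oplus n n g) (F (n - 1) n (id_oplus_iota1 G oplus b n) x) | g x.
        g \<in> carrier (G n) \<and> x \<in> V (n - 1)}"

definition left_module :: "('r, 'z) ring_scheme \<Rightarrow> ('r, 'm) module \<Rightarrow> bool" where
  "left_module R M \<longleftrightarrow> ring R \<and> abelian_group M \<and> module_axioms R M"

definition linear_map :: "('r, 'z) ring_scheme \<Rightarrow> ('r, 'm) module \<Rightarrow> ('r, 'm) module \<Rightarrow> ('m \<Rightarrow> 'm) \<Rightarrow> bool" where
  "linear_map R M N h \<longleftrightarrow>
     (\<forall>x \<in> carrier M. h x \<in> carrier N)
   \<and> (\<forall>x \<in> carrier M. \<forall>y \<in> carrier M. h (x \<oplus>\<^bsub>M\<^esub> y) = h x \<oplus>\<^bsub>N\<^esub> h y)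
   \<and> (\<forall>a \<in> carrier R. \<forall>x \<in> carrier M. h (a \<odot>\<^bsub>M\<^esub> x) = a \<odot>\<^bsub>N\<^esub> h x)"

definition mod_functor ::
  "(nat \<Rightarrow> 'g monoid) \<Rightarrow> (nat \<Rightarrow> nat \<Rightarrow> 'g \<Rightarrow> 'g \<Rightarrow> 'g) \<Rightarrow> ('r, 'z) ring_scheme \<Rightarrow>
   (nat \<Rightarrow> ('r, 'm) module) \<Rightarrow> (nat \<Rightarrow> nat \<Rightarrow> 'g set \<Rightarrow> 'm \<Rightarrow> 'm) \<Rightarrow> bool" where
  "mod_functor G oplus R V F \<longleftrightarrow>
     (\<forall>n. left_module R (V n))
   \<and> (\<forall>k n C. C \<in> uhom G oplus k n \<longrightarrow> linear_map R (V k) (V n) (F k n C))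
   \<and> set_functor G oplus (\<lambda>n. carrier (V n)) F"

text \<open>Generated in ranks \<le> d: an epimorphism \<bigoplus>_{j \<in> J} R Hom(m_j,-) \<Rightarrow> V with m_j \<le> d.
Such a natural transformation is the R-linear extension of a natural map \<eta> on the basis
\<coprod>_j Hom(m_j,-); it is an epimorphism iff in each rank the image of the linear extension,
i.e. the set of finite R-linear combinations of basis images, is all of V n.\<close>
definition mod_generated_le ::
  "(nat \<Rightarrow> 'g monoid) \<Rightarrow> (nat \<Rightarrow> nat \<Rightarrow> 'g \<Rightarrow> 'g \<Rightarrow> 'g) \<Rightarrow> ('r, 'z) ring_scheme \<Rightarrow>
   (nat \<Rightarrow> ('r, 'm) module) \<Rightarrow> (nat \<Rightarrow> nat \<Rightarrow> 'g set \<Rightarrow> 'm \<Rightarrow> 'm) \<Rightarrow> nat \<Rightarrow> bool" where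
  "mod_generated_le G oplus R V F d \<longleftrightarrow>
     (\<exists>(J :: (nat \<times> 'm) set) mj \<eta>. (\<forall>j\<in>J. mj j \<le> d)
        \<and> rep_nat G oplus J mj (\<lambda>n. carrier (V n)) F \<eta>
        \<and> (\<forall>n. carrier (V n) \<subseteq>
             {finsum (V n) (\<lambda>t. c t \<odot>\<^bsub>V n\<^esub> \<eta> n t) T | T c.
                finite T \<and> T \<subseteq> rep_basis G oplus J mj n \<and> c \<in> T \<rightarrow> carrier R}))"

text \<open>Image of the map (\<Sigma>V)_n = RG_n \<otimes>_{RG_{n-1}} V_{n-1} \<rightarrow> V_n,
g \<otimes> x \<mapsto> g \<cdot> V(id_{n-1} \<oplus> \<iota>_1)(x): the finite sums of images of elementary tensors.\<close>
definition mod_sigma_image ::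
  "(nat \<Rightarrow> 'g monoid) \<Rightarrow> (nat \<Rightarrow> nat \<Rightarrow> 'g \<Rightarrow> 'g \<Rightarrow> 'g) \<Rightarrow> (nat \<Rightarrow> nat \<Rightarrow> 'g) \<Rightarrow>
   (nat \<Rightarrow> ('r, 'm) module) \<Rightarrow> (nat \<Rightarrow> nat \<Rightarrow> 'g set \<Rightarrow> 'm \<Rightarrow> 'm) \<Rightarrow> nat \<Rightarrow> 'm set" where
  "mod_sigma_image G oplus b V F n =
     {finsum (V n) (\<lambda>i. F n n (umor G oplus n n (g i)) (F (n - 1) n (id_oplus_iota1 G oplus b n) (x i))) {..<(k::nat)}
        | k g x. (\<forall>i<k. g i \<in> carrier (G n) \<and> x i \<in> carrier (V (n - 1)))}"

end

theory Submission
  imports Defs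
begin

lemma sg_facts:
  assumes "stability_groupoid G oplus"
  shows sg_group: "group (G n)"
    and sg_closed: "g \<in> carrier (G m) \<Longrightarrow> h \<in> carrier (G n) \<Longrightarrow> oplus m n g h \<in> carrier (G (m + n))"
    and sg_one: "oplus m n \<one>\<^bsub>G m\<^esub> \<one>\<^bsub>G n\<^esub> = \<one>\<^bsub>G (m + n)\<^esub>"
    and sg_unit0: "h \<in> carrier (G n) \<Longrightarrow> oplus 0 n \<one>\<^bsub>G 0\<^esub> h = h"
  using assms unfolding stability_groupoid_def by auto

lemma sg_one_closed: "stability_groupoid G oplus \<Longrightarrow> \<one>\<^bsub>G n\<^esub> \<in> carrier (G n)"
  using group.is_monoid[OF sg_group] monoid.one_closed by blast

lemma iota_rep:
  assumes B: "braided_stability_groupoid G oplus b"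
  shows "\<exists>c \<in> carrier (G (Suc n)). id_oplus_iota1 G oplus b (Suc n) = umor G oplus n (Suc n) c"
proof -
  have S: "stability_groupoid G oplus" and bc: "\<And>m n. b m n \<in> carrier (G (m + n))"
    using B unfolding braided_stability_groupoid_def by auto
  interpret Gn: group "G (Suc n)" using sg_group[OF S] .
  interpret G0: group "G 0" using sg_group[OF S] .
  interpret G1: group "G 1" using sg_group[OF S] .
  interpret Gm: group "G n" using sg_group[OF S] .
  have i: "inv\<^bsub>G (n + 1)\<^esub> (b n 1) \<in> carrier (G (Suc n))"
    using bc[of n 1] by (simp add: group.inv_closed[OF sg_group[OF S]])
  have a: "oplus n 1 \<one>\<^bsub>G n\<^esub> \<one>\<^bsub>G 1\<^esub> \<in> carrier (G (Suc n))"
    using sg_closed[OF S, of "\<one>\<^bsub>G n\<^esub>" n "\<one>\<^bsub>G 1\<^esub>" 1] sg_one_closed[OF S] by simp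
  have c2: "oplus (Suc n) 0 (inv\<^bsub>G (n + 1)\<^esub> (b n 1)) \<one>\<^bsub>G 0\<^esub> \<in> carrier (G (Suc n))"
    using sg_closed[OF S, of "inv\<^bsub>G (n + 1)\<^esub> (b n 1)" "Suc n" "\<one>\<^bsub>G 0\<^esub>" 0] i by simp
  have c3: "oplus 0 (Suc n) \<one>\<^bsub>G 0\<^esub> (oplus (Suc n) 0 (inv\<^bsub>G (n + 1)\<^esub> (b n 1)) \<one>\<^bsub>G 0\<^esub>) \<in> carrier (G (Suc n))"
    using sg_closed[OF S, of "\<one>\<^bsub>G 0\<^esub>" 0 _ "Suc n"] c2 by simp
  show ?thesis
    apply (rule bexI[of _ "oplus n 1 \<one>\<^bsub>G n\<^esub> \<one>\<^bsub>G 1\<^esub> \<otimes>\<^bsub>G (Suc n)\<^esub>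
        oplus 0 (Suc n) \<one>\<^bsub>G 0\<^esub> (oplus (Suc n) 0 (inv\<^bsub>G (n + 1)\<^esub> (b n 1)) \<one>\<^bsub>G 0\<^esub>)"])
    unfolding id_oplus_iota1_def uoplus_def using a c3 by auto
qed

lemma sf_comp:
  assumes "set_functor G oplus V F" "k \<le> n" "n \<le> p" "f \<in> carrier (G p)" "g \<in> carrier (G n)" "x \<in> V k"
  shows "F n p (umor G oplus n p f) (F k n (umor G oplus k n g) x)
        = F k p (umor G oplus k p (f \<otimes>\<^bsub>G p\<^esub> oplus (p - n) n \<one>\<^bsub>G (p - n)\<^esub> g)) x"
  using assms unfolding set_functor_def by blast

lemma sf_closed:
  assumes "set_functor G oplus V F" "C \<in> uhom G oplus k n" "x \<in> V k"
  shows "F k n C x \<in> V n"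
  using assms unfolding set_functor_def by blast

lemma sf_id:
  assumes "set_functor G oplus V F" "x \<in> V n"
  shows "F n n (umor G oplus n n \<one>\<^bsub>G n\<^esub>) x = x"
  using assms unfolding set_functor_def by blast

lemma umor_in_uhom: "k \<le> n \<Longrightarrow> g \<in> carrier (G n) \<Longrightarrow> umor G oplus k n g \<in> uhom G oplus k n"
  unfolding uhom_def by auto

lemma uhomE: "C \<in> uhom G oplus k n \<Longrightarrow> (\<And>g. k \<le> n \<Longrightarrow> g \<in> carrier (G n) \<Longrightarrow> C = umor G oplus k n g \<Longrightarrow> P) \<Longrightarrow> P"
  unfolding uhom_def by (auto split: if_splits)

lemma sigma_a:
  assumes S: "stability_groupoid G oplus" and V: "set_functor G oplus V F"
    and c: "c \<in> carrier (G (Suc n))" "id_oplus_iota1 G oplus b (Suc n) = umor G oplus n (Suc n) c"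
    and g: "g \<in> carrier (G (Suc n))" and x: "x \<in> V n"
  shows "F (Suc n) (Suc n) (umor G oplus (Suc n) (Suc n) g) (F n (Suc n) (id_oplus_iota1 G oplus b (Suc n)) x)
       = F n (Suc n) (umor G oplus n (Suc n) (g \<otimes>\<^bsub>G (Suc n)\<^esub> c)) x"
  using sf_comp[OF V, of n "Suc n" "Suc n" g c x] c g x sg_unit0[OF S c(1)] by simp

lemma sigma_b:
  assumes S: "stability_groupoid G oplus" and V: "set_functor G oplus V F"
    and c: "c \<in> carrier (G (Suc n))" "id_oplus_iota1 G oplus b (Suc n) = umor G oplus n (Suc n) c"
    and g: "g \<in> carrier (G (Suc n))" and x: "x \<in> V n"
  shows "F n (Suc n) (umor G oplus n (Suc n) g) x =
     F (Suc n) (Suc n) (umor G oplus (Suc n) (Suc n) (g \<otimes>\<^bsub>G (Suc n)\<^esub> inv\<^bsub>G (Suc n)\<^esub> c)) (F n (Suc n) (id_oplus_iota1 G oplus b (Suc n)) x)"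
proof -
  interpret Gn: group "G (Suc n)" using sg_group[OF S] .
  show ?thesis
    apply (subst sigma_a[OF S V c _ x])
    using c g by (auto simp: Gn.m_assoc)
qed

lemma rn_nat:
  assumes "rep_nat G oplus J mj V F \<eta>" "j \<in> J" "mj j \<le> n" "n \<le> p" "f \<in> carrier (G p)" "g \<in> carrier (G n)"
  shows "\<eta> p (j, umor G oplus (mj j) p (f \<otimes>\<^bsub>G p\<^esub> oplus (p - n) n \<one>\<^bsub>G (p - n)\<^esub> g))
        = F n p (umor G oplus n p f) (\<eta> n (j, umor G oplus (mj j) n g))"
  using assms unfolding rep_nat_def by blast

lemma rn_img:
  assumes "rep_nat G oplus J mj V F \<eta>" "t \<in> rep_basis G oplus J mj n"
  shows "\<eta> n t \<in> V n"
proof -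
  have "\<eta> n ` rep_basis G oplus J mj n \<subseteq> V n" using assms(1) unfolding rep_nat_def by simp
  then show ?thesis using assms(2) by (simp add: image_subset_iff)
qed

lemma rn_closed:
  assumes "rep_nat G oplus J mj V F \<eta>" "j \<in> J" "C \<in> uhom G oplus (mj j) n"
  shows "\<eta> n (j, C) \<in> V n"
  using assms unfolding rep_nat_def rep_basis_def by blast

lemma gen_factor:
  assumes S: "stability_groupoid G oplus" and R: "rep_nat G oplus J mj V F \<eta>"
    and j: "j \<in> J" and le: "mj j \<le> n" and g: "g \<in> carrier (G (Suc n))"
  shows "\<eta> (Suc n) (j, umor G oplus (mj j) (Suc n) g)
      = F n (Suc n) (umor G oplus n (Suc n) g) (\<eta> n (j, umor G oplus (mj j) n \<one>\<^bsub>G n\<^esub>))"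
proof -
  interpret Gn: group "G (Suc n)" using sg_group[OF S] .
  have "oplus (Suc n - n) n \<one>\<^bsub>G (Suc n - n)\<^esub> \<one>\<^bsub>G n\<^esub> = \<one>\<^bsub>G (Suc n)\<^esub>"
    using sg_one[OF S, of "Suc n - n" n] by simp
  then show ?thesis
    using rn_nat[OF R j le _ g sg_one_closed[OF S]] g by simp
qed

lemma set_fwd:
  fixes V :: "nat \<Rightarrow> 'a set" and G :: "nat \<Rightarrow> 'g monoid"
  assumes B: "braided_stability_groupoid G oplus b" and V: "set_functor G oplus V F"
    and gen: "set_generated_le G oplus V F d" and n: "n > d" and v: "v \<in> V n"
  shows "v \<in> set_sigma_image G oplus b V F n"
proof -
  have S: "stability_groupoid G oplus" using B unfolding braided_stability_groupoid_def by auto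
  obtain n' where nn: "n = Suc n'" using n by (cases n) auto
  obtain c where c: "c \<in> carrier (G (Suc n'))" "id_oplus_iota1 G oplus b (Suc n') = umor G oplus n' (Suc n') c"
    using iota_rep[OF B] by blast
  interpret Gn: group "G (Suc n')" using sg_group[OF S] .
  obtain J :: "(nat \<times> 'a) set" and mj \<eta> where J: "\<forall>j\<in>J. mj j \<le> d" and R: "rep_nat G oplus J mj V F \<eta>"
    and sur: "\<forall>n. V n \<subseteq> \<eta> n ` rep_basis G oplus J mj n"
    using gen unfolding set_generated_le_def by blast
  obtain j C where jC: "j \<in> J" "C \<in> uhom G oplus (mj j) n" "v = \<eta> n (j, C)"
    using sur v unfolding rep_basis_def by blast
  then obtain g where g: "g \<in> carrier (G n)" "C = umor G oplus (mj j) n g" by (auto elim: uhomE)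
  have le: "mj j \<le> n'" using J jC n nn by force
  define x where "x = \<eta> n' (j, umor G oplus (mj j) n' \<one>\<^bsub>G n'\<^esub>)"
  have x: "x \<in> V n'" unfolding x_def
    by (rule rn_closed[OF R jC(1)]) (use le sg_one_closed[OF S] in \<open>auto intro: umor_in_uhom\<close>)
  have "v = F n' (Suc n') (umor G oplus n' (Suc n') g) x"
    unfolding x_def using gen_factor[OF S R jC(1) le, of g] jC g nn by simp
  also have "\<dots> = F (Suc n') (Suc n') (umor G oplus (Suc n') (Suc n') (g \<otimes>\<^bsub>G (Suc n')\<^esub> inv\<^bsub>G (Suc n')\<^esub> c))
      (F n' (Suc n') (id_oplus_iota1 G oplus b (Suc n')) x)"
    by (rule sigma_b[OF S V c _ x]) (use g nn in simp)
  finally have "v = F (Suc n') (Suc n') (umor G oplus (Suc n') (Suc n') (g \<otimes>\<^bsub>G (Suc n')\<^esub> inv\<^bsub>G (Suc n')\<^esub> c))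
      (F n' (Suc n') (id_oplus_iota1 G oplus b (Suc n')) x)" .
  moreover have "g \<otimes>\<^bsub>G (Suc n')\<^esub> inv\<^bsub>G (Suc n')\<^esub> c \<in> carrier (G (Suc n'))"
    using g c nn by simp
  ultimately show ?thesis unfolding set_sigma_image_def nn using x by (auto intro!: exI)
qed

lemma rep_nat_canon:
  fixes V :: "nat \<Rightarrow> 'a set" and G :: "nat \<Rightarrow> 'g monoid"
  assumes V: "set_functor G oplus V F"
  shows "rep_nat G oplus {(m, x). m \<le> d \<and> x \<in> V m} fst V F (\<lambda>n t. F (fst (fst t)) n (snd t) (snd (fst t)))"
  unfolding rep_nat_def rep_basis_def
proof (intro conjI allI impI)
  fix n show "(\<lambda>t. F (fst (fst t)) n (snd t) (snd (fst t))) ` {(j, C). j \<in> {(m, x). m \<le> d \<and> x \<in> V m} \<and> C \<in> uhom G oplus (fst j) n} \<subseteq> V n"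
    using sf_closed[OF V] by auto
next
  fix j :: "nat \<times> 'a" and n p f g
  assume "j \<in> {(m, x). m \<le> d \<and> x \<in> V m}" "fst j \<le> n" "n \<le> p" "f \<in> carrier (G p)" "g \<in> carrier (G n)"
  then show "F (fst (fst (j, umor G oplus (fst j) p (f \<otimes>\<^bsub>G p\<^esub> oplus (p - n) n \<one>\<^bsub>G (p - n)\<^esub> g)))) p
          (snd (j, umor G oplus (fst j) p (f \<otimes>\<^bsub>G p\<^esub> oplus (p - n) n \<one>\<^bsub>G (p - n)\<^esub> g)))
          (snd (fst (j, umor G oplus (fst j) p (f \<otimes>\<^bsub>G p\<^esub> oplus (p - n) n \<one>\<^bsub>G (p - n)\<^esub> g)))) =
         F n p (umor G oplus n p f)
          (F (fst (fst (j, umor G oplus (fst j) n g))) n (snd (j, umor G oplus (fst j) n g))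
            (snd (fst (j, umor G oplus (fst j) n g))))"
    using sf_comp[OF V] by auto
qed

lemma canon_span:
  fixes V :: "nat \<Rightarrow> 'a set" and G :: "nat \<Rightarrow> 'g monoid"
  assumes B: "braided_stability_groupoid G oplus b" and V: "set_functor G oplus V F"
    and H: "\<forall>n>d. V n \<subseteq> set_sigma_image G oplus b V F n"
  shows "V n \<subseteq> (\<lambda>t. F (fst (fst t)) n (snd t) (snd (fst t))) ` rep_basis G oplus {(m, x). m \<le> d \<and> x \<in> V m} fst n"
proof (induction n)
  have S: "stability_groupoid G oplus" using B unfolding braided_stability_groupoid_def by auto
  {
    fix n v assume n: "n \<le> d" and v: "v \<in> V n"
    have "v \<in> (\<lambda>t. F (fst (fst t)) n (snd t) (snd (fst t))) ` rep_basis G oplus {(m, x). m \<le> d \<and> x \<in> V m} fst n"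
      apply (rule image_eqI[where x = "((n, v), umor G oplus n n \<one>\<^bsub>G n\<^esub>)"])
      using sf_id[OF V v] n v sg_one_closed[OF S] umor_in_uhom[where G=G and oplus=oplus, of n n] unfolding rep_basis_def by auto
  } note low = this
  case 0
  then show ?case using low by blast
next
  have S: "stability_groupoid G oplus" using B unfolding braided_stability_groupoid_def by auto
  interpret GN: group "G (Suc n)" for n using sg_group[OF S] .
  case (Suc n)
  show ?case
  proof
    fix v assume v: "v \<in> V (Suc n)"
    show "v \<in> (\<lambda>t. F (fst (fst t)) (Suc n) (snd t) (snd (fst t))) ` rep_basis G oplus {(m, x). m \<le> d \<and> x \<in> V m} fst (Suc n)"
    proof (cases "Suc n \<le> d")
      case True
      show ?thesis
        apply (rule image_eqI[where x = "((Suc n, v), umor G oplus (Suc n) (Suc n) \<one>\<^bsub>G (Suc n)\<^esub>)"])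
        using sf_id[OF V v] True v sg_one_closed[OF S] umor_in_uhom[where G=G and oplus=oplus, of "Suc n" "Suc n"] unfolding rep_basis_def by auto
    next
      case False
      obtain c where c: "c \<in> carrier (G (Suc n))" "id_oplus_iota1 G oplus b (Suc n) = umor G oplus n (Suc n) c"
        using iota_rep[OF B] by blast
      have "v \<in> set_sigma_image G oplus b V F (Suc n)" using H[rule_format, of "Suc n"] False v by auto
      then obtain g x where gx: "g \<in> carrier (G (Suc n))" "x \<in> V n"
        "v = F (Suc n) (Suc n) (umor G oplus (Suc n) (Suc n) g) (F n (Suc n) (id_oplus_iota1 G oplus b (Suc n)) x)"
        unfolding set_sigma_image_def by auto
      have "x \<in> (\<lambda>t. F (fst (fst t)) n (snd t) (snd (fst t))) ` rep_basis G oplus {(m, x). m \<le> d \<and> x \<in> V m} fst n"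
        using Suc.IH gx(2) by blast
      then obtain t where t: "t \<in> rep_basis G oplus {(m, x). m \<le> d \<and> x \<in> V m} fst n"
        "x = F (fst (fst t)) n (snd t) (snd (fst t))" by (rule imageE)
      obtain m y C' where tt: "t = ((m, y), C')" by (cases t) auto
      have my: "m \<le> d" "y \<in> V m" "C' \<in> uhom G oplus m n" "x = F m n C' y"
        using t unfolding tt rep_basis_def by auto
      from my(3) obtain g' where g': "m \<le> n" "g' \<in> carrier (G n)" "C' = umor G oplus m n g'" by (rule uhomE)
      have v2: "v = F n (Suc n) (umor G oplus n (Suc n) (g \<otimes>\<^bsub>G (Suc n)\<^esub> c)) x"
        using sigma_a[OF S V c gx(1) gx(2)] gx(3) by simp
      have e: "Suc n - n = 1" by simp
      have cl: "oplus 1 n \<one>\<^bsub>G 1\<^esub> g' \<in> carrier (G (Suc n))"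
        using sg_closed[OF S sg_one_closed[OF S] g'(2), of 1] by simp
      have v3: "v = F m (Suc n) (umor G oplus m (Suc n) ((g \<otimes>\<^bsub>G (Suc n)\<^esub> c) \<otimes>\<^bsub>G (Suc n)\<^esub> oplus 1 n \<one>\<^bsub>G 1\<^esub> g')) y"
        using v2 sf_comp[OF V g'(1) _ _ g'(2) my(2), of "Suc n" "g \<otimes>\<^bsub>G (Suc n)\<^esub> c"] gx(1) c(1) my(4) g'(3)
        by (simp add: e)
      show ?thesis
        apply (rule image_eqI[where x = "((m, y), umor G oplus m (Suc n) ((g \<otimes>\<^bsub>G (Suc n)\<^esub> c) \<otimes>\<^bsub>G (Suc n)\<^esub> oplus 1 n \<one>\<^bsub>G 1\<^esub> g'))"])
        using v3 my g' gx(1) c(1) cl umor_in_uhom[where G=G and oplus=oplus, of m "Suc n"] unfolding rep_basis_def by auto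
    qed
  qed
qed

lemma set_bwd:
  fixes V :: "nat \<Rightarrow> 'a set" and G :: "nat \<Rightarrow> 'g monoid"
  assumes B: "braided_stability_groupoid G oplus b" and V: "set_functor G oplus V F"
    and H: "\<forall>n>d. V n \<subseteq> set_sigma_image G oplus b V F n"
  shows "set_generated_le G oplus V F d"
  unfolding set_generated_le_def
  apply (rule exI[where x = "{(m, x). m \<le> d \<and> x \<in> V m}"])
  apply (rule exI[where x = fst])
  apply (rule exI[where x = "\<lambda>n t. F (fst (fst t)) n (snd t) (snd (fst t))"])
  using rep_nat_canon[OF V] canon_span[OF B V H] by auto

lemma lm_facts:
  assumes "left_module R M"
  shows lm_ring: "ring R" and lm_ag: "abelian_group M"
    and lm_smult_closed: "a \<in> carrier R \<Longrightarrow> x \<in> carrier M \<Longrightarrow> a \<odot>\<^bsub>M\<^esub> x \<in> carrier M"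
    and lm_l_distr: "a \<in> carrier R \<Longrightarrow> a' \<in> carrier R \<Longrightarrow> x \<in> carrier M \<Longrightarrow>
        (a \<oplus>\<^bsub>R\<^esub> a') \<odot>\<^bsub>M\<^esub> x = a \<odot>\<^bsub>M\<^esub> x \<oplus>\<^bsub>M\<^esub> a' \<odot>\<^bsub>M\<^esub> x"
    and lm_r_distr: "a \<in> carrier R \<Longrightarrow> x \<in> carrier M \<Longrightarrow> y \<in> carrier M \<Longrightarrow>
        a \<odot>\<^bsub>M\<^esub> (x \<oplus>\<^bsub>M\<^esub> y) = a \<odot>\<^bsub>M\<^esub> x \<oplus>\<^bsub>M\<^esub> a \<odot>\<^bsub>M\<^esub> y"
    and lm_one: "x \<in> carrier M \<Longrightarrow> \<one>\<^bsub>R\<^esub> \<odot>\<^bsub>M\<^esub> x = x"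
  using assms unfolding left_module_def module_axioms_def by auto

lemma lm_l_null:
  assumes M: "left_module R M" and x: "x \<in> carrier M"
  shows "\<zero>\<^bsub>R\<^esub> \<odot>\<^bsub>M\<^esub> x = \<zero>\<^bsub>M\<^esub>"
proof -
  interpret R: ring R using lm_ring[OF M] .
  interpret M: abelian_group M using lm_ag[OF M] .
  have c: "\<zero>\<^bsub>R\<^esub> \<odot>\<^bsub>M\<^esub> x \<in> carrier M" using lm_smult_closed[OF M _ x] by simp
  have "\<zero>\<^bsub>R\<^esub> \<odot>\<^bsub>M\<^esub> x \<oplus>\<^bsub>M\<^esub> \<zero>\<^bsub>R\<^esub> \<odot>\<^bsub>M\<^esub> x = \<zero>\<^bsub>R\<^esub> \<odot>\<^bsub>M\<^esub> x \<oplus>\<^bsub>M\<^esub> \<zero>\<^bsub>M\<^esub>"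
    using lm_l_distr[OF M, of "\<zero>\<^bsub>R\<^esub>" "\<zero>\<^bsub>R\<^esub>" x] x c by simp
  then show ?thesis using c M.add.l_cancel_one[of "\<zero>\<^bsub>R\<^esub> \<odot>\<^bsub>M\<^esub> x"] by simp
qed

lemma lin_facts:
  assumes "linear_map R M N h"
  shows lin_closed: "x \<in> carrier M \<Longrightarrow> h x \<in> carrier N"
    and lin_add: "x \<in> carrier M \<Longrightarrow> y \<in> carrier M \<Longrightarrow> h (x \<oplus>\<^bsub>M\<^esub> y) = h x \<oplus>\<^bsub>N\<^esub> h y"
    and lin_smult: "a \<in> carrier R \<Longrightarrow> x \<in> carrier M \<Longrightarrow> h (a \<odot>\<^bsub>M\<^esub> x) = a \<odot>\<^bsub>N\<^esub> h x"
  using assms unfolding linear_map_def by auto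

lemma lin_zero:
  assumes M: "left_module R M" and N: "left_module R N" and h: "linear_map R M N h"
  shows "h \<zero>\<^bsub>M\<^esub> = \<zero>\<^bsub>N\<^esub>"
proof -
  interpret R: ring R using lm_ring[OF M] .
  interpret M: abelian_group M using lm_ag[OF M] .
  have "h \<zero>\<^bsub>M\<^esub> = h (\<zero>\<^bsub>R\<^esub> \<odot>\<^bsub>M\<^esub> \<zero>\<^bsub>M\<^esub>)" using lm_l_null[OF M] by simp
  also have "\<dots> = \<zero>\<^bsub>R\<^esub> \<odot>\<^bsub>N\<^esub> h \<zero>\<^bsub>M\<^esub>" using lin_smult[OF h] by simp
  also have "\<dots> = \<zero>\<^bsub>N\<^esub>" using lm_l_null[OF N] lin_closed[OF h] by simp
  finally show ?thesis .
qed

lemma lin_finsum: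
  assumes M: "left_module R M" and N: "left_module R N" and h: "linear_map R M N h"
    and T: "finite T" and f: "f \<in> T \<rightarrow> carrier M"
  shows "h (finsum M f T) = finsum N (\<lambda>t. h (f t)) T"
  using T f
proof (induction T rule: finite_induct)
  case empty
  interpret M: abelian_group M using lm_ag[OF M] .
  interpret N: abelian_group N using lm_ag[OF N] .
  show ?case using lin_zero[OF M N h] by simp
next
  case (insert t T)
  interpret M: abelian_group M using lm_ag[OF M] .
  interpret N: abelian_group N using lm_ag[OF N] .
  have ft: "f t \<in> carrier M" and fT: "f \<in> T \<rightarrow> carrier M" using insert by auto
  have "h (finsum M f (insert t T)) = h (f t \<oplus>\<^bsub>M\<^esub> finsum M f T)"
    using M.finsum_insert[OF insert(1,2) fT ft] by simp
  also have "\<dots> = h (f t) \<oplus>\<^bsub>N\<^esub> finsum N (\<lambda>t. h (f t)) T"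
    using lin_add[OF h ft M.finsum_closed[OF fT]] insert(3)[OF fT] by simp
  also have "\<dots> = finsum N (\<lambda>t. h (f t)) (insert t T)"
  proof -
    have "(\<lambda>t. h (f t)) \<in> T \<rightarrow> carrier N" using fT lin_closed[OF h] by auto
    then show ?thesis using N.finsum_insert[OF insert(1,2), of "\<lambda>t. h (f t)"] lin_closed[OF h] ft by auto
  qed
  finally show ?case .
qed

definition lcomb :: "('r, 'z) ring_scheme \<Rightarrow> ('r, 'm) module \<Rightarrow> ('t \<Rightarrow> 'm) \<Rightarrow> 't set \<Rightarrow> 'm set" where
  "lcomb R M f B = {finsum M (\<lambda>t. c t \<odot>\<^bsub>M\<^esub> f t) T | T c. finite T \<and> T \<subseteq> B \<and> c \<in> T \<rightarrow> carrier R}"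

lemma lcomb_zero:
  assumes M: "left_module R M"
  shows "\<zero>\<^bsub>M\<^esub> \<in> lcomb R M f B"
proof -
  interpret M: abelian_group M using lm_ag[OF M] .
  show ?thesis unfolding lcomb_def
    by (rule CollectI, rule exI[where x = "{}"], rule exI[where x = "\<lambda>_. \<zero>\<^bsub>R\<^esub>"]) simp
qed

lemma lcomb_single:
  assumes M: "left_module R M" and f: "f ` B \<subseteq> carrier M" and t: "t \<in> B" and a: "a \<in> carrier R"
  shows "a \<odot>\<^bsub>M\<^esub> f t \<in> lcomb R M f B"
proof -
  interpret M: abelian_group M using lm_ag[OF M] .
  have "a \<odot>\<^bsub>M\<^esub> f t \<in> carrier M" using lm_smult_closed[OF M a] f t by auto
  then have "finsum M (\<lambda>s. (\<lambda>_. a) s \<odot>\<^bsub>M\<^esub> f s) {t} = a \<odot>\<^bsub>M\<^esub> f t"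
    by simp
  then show ?thesis unfolding lcomb_def using t a by (intro CollectI exI[where x = "{t}"] exI[where x = "\<lambda>_. a"]) auto
qed

lemma lcomb_add:
  assumes M: "left_module R M" and f: "f ` B \<subseteq> carrier M"
    and x: "x \<in> lcomb R M f B" and y: "y \<in> lcomb R M f B"
  shows "x \<oplus>\<^bsub>M\<^esub> y \<in> lcomb R M f B"
proof -
  interpret R: ring R using lm_ring[OF M] .
  interpret M: abelian_group M using lm_ag[OF M] .
  obtain T1 c1 where 1: "x = finsum M (\<lambda>t. c1 t \<odot>\<^bsub>M\<^esub> f t) T1" "finite T1" "T1 \<subseteq> B" "c1 \<in> T1 \<rightarrow> carrier R"
    using x unfolding lcomb_def by blast
  obtain T2 c2 where 2: "y = finsum M (\<lambda>t. c2 t \<odot>\<^bsub>M\<^esub> f t) T2" "finite T2" "T2 \<subseteq> B" "c2 \<in> T2 \<rightarrow> carrier R"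
    using y unfolding lcomb_def by blast
  define d1 where "d1 t = (if t \<in> T1 then c1 t else \<zero>\<^bsub>R\<^esub>)" for t
  define d2 where "d2 t = (if t \<in> T2 then c2 t else \<zero>\<^bsub>R\<^esub>)" for t
  have d1: "d1 t \<in> carrier R" for t using 1(4) unfolding d1_def by auto
  have d2: "d2 t \<in> carrier R" for t using 2(4) unfolding d2_def by auto
  have fB: "t \<in> T1 \<union> T2 \<Longrightarrow> f t \<in> carrier M" for t using f 1(3) 2(3) by auto
  have fin: "finite (T1 \<union> T2)" using 1 2 by auto
  have e1: "finsum M (\<lambda>t. d1 t \<odot>\<^bsub>M\<^esub> f t) (T1 \<union> T2) = x"
    unfolding 1(1)
    by (rule M.add.finprod_mono_neutral_cong_left[symmetric])
       (use fin fB 1(4) lm_l_null[OF M] lm_smult_closed[OF M d1] lm_smult_closed[OF M] in \<open>auto simp: d1_def Pi_iff\<close>)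
  have e2: "finsum M (\<lambda>t. d2 t \<odot>\<^bsub>M\<^esub> f t) (T1 \<union> T2) = y"
    unfolding 2(1)
    by (rule M.add.finprod_mono_neutral_cong_left[symmetric])
       (use fin fB 2(4) lm_l_null[OF M] lm_smult_closed[OF M d2] lm_smult_closed[OF M] in \<open>auto simp: d2_def Pi_iff\<close>)
  have "finsum M (\<lambda>t. (d1 t \<oplus>\<^bsub>R\<^esub> d2 t) \<odot>\<^bsub>M\<^esub> f t) (T1 \<union> T2)
      = finsum M (\<lambda>t. d1 t \<odot>\<^bsub>M\<^esub> f t \<oplus>\<^bsub>M\<^esub> d2 t \<odot>\<^bsub>M\<^esub> f t) (T1 \<union> T2)"
    by (rule M.finsum_cong) (use fB d1 d2 lm_l_distr[OF M] lm_smult_closed[OF M] in auto)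
  also have "\<dots> = x \<oplus>\<^bsub>M\<^esub> y"
    unfolding e1[symmetric] e2[symmetric]
    by (rule M.finsum_addf) (use fB d1 d2 lm_smult_closed[OF M] in auto)
  finally show ?thesis unfolding lcomb_def using fin 1(3) 2(3) d1 d2
    by (intro CollectI exI[where x = "T1 \<union> T2"] exI[where x = "\<lambda>t. d1 t \<oplus>\<^bsub>R\<^esub> d2 t"]) auto
qed

lemma lcomb_finsum:
  assumes M: "left_module R M" and f: "f ` B \<subseteq> carrier M"
    and I: "finite I" and g: "\<And>i. i \<in> I \<Longrightarrow> g i \<in> lcomb R M f B"
  shows "finsum M g I \<in> lcomb R M f B"
  using I g
proof (induction I rule: finite_induct)
  case empty
  interpret M: abelian_group M using lm_ag[OF M] .
  show ?case using lcomb_zero[OF M] by simp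
next
  case (insert i I)
  interpret M: abelian_group M using lm_ag[OF M] .
  have sub: "lcomb R M f B \<subseteq> carrier M"
  proof
    fix z assume "z \<in> lcomb R M f B"
    then obtain T c where "z = finsum M (\<lambda>t. c t \<odot>\<^bsub>M\<^esub> f t) T" "T \<subseteq> B" "c \<in> T \<rightarrow> carrier R"
      unfolding lcomb_def by blast
    moreover have "(\<lambda>t. c t \<odot>\<^bsub>M\<^esub> f t) \<in> T \<rightarrow> carrier M"
    proof
      fix t assume "t \<in> T"
      then have "c t \<in> carrier R" "f t \<in> carrier M" using \<open>T \<subseteq> B\<close> \<open>c \<in> T \<rightarrow> carrier R\<close> f by auto
      then show "c t \<odot>\<^bsub>M\<^esub> f t \<in> carrier M" by (rule lm_smult_closed[OF M])
    qed
    ultimately show "z \<in> carrier M" by (simp add: M.finsum_closed)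
  qed
  have gI: "g \<in> I \<rightarrow> carrier M" using insert sub by auto
  have "finsum M g (insert i I) = g i \<oplus>\<^bsub>M\<^esub> finsum M g I"
    using M.finsum_insert[OF insert(1,2) gI] insert sub by auto
  then show ?case using lcomb_add[OF M f] insert by auto
qed

lemma canon_lift:
  fixes V :: "nat \<Rightarrow> 'a set" and G :: "nat \<Rightarrow> 'g monoid"
  assumes B: "braided_stability_groupoid G oplus b" and V: "set_functor G oplus V F"
    and g: "g \<in> carrier (G (Suc n))"
    and t: "t \<in> rep_basis G oplus {(m, x). m \<le> d \<and> x \<in> V m} fst n"
  shows "\<exists>t' \<in> rep_basis G oplus {(m, x). m \<le> d \<and> x \<in> V m} fst (Suc n).
     F (Suc n) (Suc n) (umor G oplus (Suc n) (Suc n) g) (F n (Suc n) (id_oplus_iota1 G oplus b (Suc n))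
        (F (fst (fst t)) n (snd t) (snd (fst t))))
     = F (fst (fst t')) (Suc n) (snd t') (snd (fst t'))"
proof -
  have S: "stability_groupoid G oplus" using B unfolding braided_stability_groupoid_def by auto
  interpret GN: group "G (Suc n)" using sg_group[OF S] .
  obtain c where c: "c \<in> carrier (G (Suc n))" "id_oplus_iota1 G oplus b (Suc n) = umor G oplus n (Suc n) c"
    using iota_rep[OF B] by blast
  obtain m y C' where tt: "t = ((m, y), C')" by (cases t) auto
  have my: "m \<le> d" "y \<in> V m" "C' \<in> uhom G oplus m n"
    using t unfolding tt rep_basis_def by auto
  define x where "x = F m n C' y"
  have x: "x \<in> V n" unfolding x_def by (rule sf_closed[OF V my(3,2)])
  from my(3) obtain g' where g': "m \<le> n" "g' \<in> carrier (G n)" "C' = umor G oplus m n g'" by (rule uhomE)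
  have v2: "F (Suc n) (Suc n) (umor G oplus (Suc n) (Suc n) g) (F n (Suc n) (id_oplus_iota1 G oplus b (Suc n)) x)
     = F n (Suc n) (umor G oplus n (Suc n) (g \<otimes>\<^bsub>G (Suc n)\<^esub> c)) x"
    using sigma_a[OF S V c g x] by simp
  have e: "Suc n - n = 1" by simp
  have cl: "oplus 1 n \<one>\<^bsub>G 1\<^esub> g' \<in> carrier (G (Suc n))"
    using sg_closed[OF S sg_one_closed[OF S] g'(2), of 1] by simp
  have v3: "F (Suc n) (Suc n) (umor G oplus (Suc n) (Suc n) g) (F n (Suc n) (id_oplus_iota1 G oplus b (Suc n)) x)
      = F m (Suc n) (umor G oplus m (Suc n) ((g \<otimes>\<^bsub>G (Suc n)\<^esub> c) \<otimes>\<^bsub>G (Suc n)\<^esub> oplus 1 n \<one>\<^bsub>G 1\<^esub> g')) y"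
    unfolding v2 unfolding x_def
    using sf_comp[OF V g'(1) _ _ g'(2) my(2), of "Suc n" "g \<otimes>\<^bsub>G (Suc n)\<^esub> c"] g c(1) g'(3)
    by (simp add: e)
  show ?thesis
    apply (rule bexI[where x = "((m, y), umor G oplus m (Suc n) ((g \<otimes>\<^bsub>G (Suc n)\<^esub> c) \<otimes>\<^bsub>G (Suc n)\<^esub> oplus 1 n \<one>\<^bsub>G 1\<^esub> g'))"])
    using v3 my g' g c(1) cl umor_in_uhom[where G=G and oplus=oplus, of m "Suc n"] unfolding rep_basis_def x_def tt by auto
qed

section \<open>Module functors\<close>

lemma mf_facts:
  assumes "mod_functor G oplus R V F"
  shows mf_lm: "left_module R (V n)"
    and mf_lin: "C \<in> uhom G oplus k n \<Longrightarrow> linear_map R (V k) (V n) (F k n C)"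
    and mf_sf: "set_functor G oplus (\<lambda>n. carrier (V n)) F"
  using assms unfolding mod_functor_def by auto

lemma lin_comp:
  "linear_map R M N h1 \<Longrightarrow> linear_map R N P h2 \<Longrightarrow> linear_map R M P (\<lambda>y. h2 (h1 y))"
  unfolding linear_map_def by auto

lemma mod_fwd:
  fixes V :: "nat \<Rightarrow> ('r, 'm) module" and G :: "nat \<Rightarrow> 'g monoid" and R :: "('r, 'z) ring_scheme"
  assumes B: "braided_stability_groupoid G oplus b" and MF: "mod_functor G oplus R V F"
    and gen: "mod_generated_le G oplus R V F d" and n: "n > d" and v: "v \<in> carrier (V n)"
  shows "v \<in> mod_sigma_image G oplus b V F n"
proof -
  have S: "stability_groupoid G oplus" using B unfolding braided_stability_groupoid_def by auto
  note W = mf_sf[OF MF]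
  obtain n' where nn: "n = Suc n'" using n by (cases n) auto
  obtain c where c: "c \<in> carrier (G (Suc n'))" "id_oplus_iota1 G oplus b (Suc n') = umor G oplus n' (Suc n') c"
    using iota_rep[OF B] by blast
  interpret Gn: group "G (Suc n')" using sg_group[OF S] .
  interpret Vn: abelian_group "V n" using lm_ag[OF mf_lm[OF MF]] .
  obtain J :: "(nat \<times> 'm) set" and mj \<eta> where J: "\<forall>j\<in>J. mj j \<le> d"
    and R: "rep_nat G oplus J mj (\<lambda>n. carrier (V n)) F \<eta>"
    and sur: "\<forall>n. carrier (V n) \<subseteq>
             {finsum (V n) (\<lambda>t. c t \<odot>\<^bsub>V n\<^esub> \<eta> n t) T | T c.
                finite T \<and> T \<subseteq> rep_basis G oplus J mj n \<and> c \<in> T \<rightarrow> carrier R}"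
    using gen unfolding mod_generated_le_def by blast
  obtain T cc where T: "v = finsum (V n) (\<lambda>t. cc t \<odot>\<^bsub>V n\<^esub> \<eta> n t) T" "finite T"
    "T \<subseteq> rep_basis G oplus J mj n" "cc \<in> T \<rightarrow> carrier R"
    using sur v by blast
  have iota_hom: "id_oplus_iota1 G oplus b (Suc n') \<in> uhom G oplus n' (Suc n')"
    using c umor_in_uhom[where G=G and oplus=oplus, of n' "Suc n'"] by simp
  have claim: "\<exists>g x. g \<in> carrier (G n) \<and> x \<in> carrier (V n') \<and>
      cc t \<odot>\<^bsub>V n\<^esub> \<eta> n t = F n n (umor G oplus n n g) (F n' n (id_oplus_iota1 G oplus b n) x)"
    if t: "t \<in> T" for t
  proof -
    obtain j C where jC: "t = (j, C)" by (cases t)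
    have jC2: "j \<in> J" "C \<in> uhom G oplus (mj j) n" using t T(3) unfolding jC rep_basis_def by auto
    then obtain g0 where g0: "g0 \<in> carrier (G n)" "C = umor G oplus (mj j) n g0" by (auto elim: uhomE)
    have le: "mj j \<le> n'" using J jC2 n nn by force
    define x where "x = \<eta> n' (j, umor G oplus (mj j) n' \<one>\<^bsub>G n'\<^esub>)"
    have x: "x \<in> carrier (V n')" unfolding x_def
      by (rule rn_closed[OF R jC2(1)]) (use le sg_one_closed[OF S] in \<open>auto intro: umor_in_uhom\<close>)
    have ct: "cc t \<in> carrier R" using T(4) t by auto
    have gi: "g0 \<otimes>\<^bsub>G (Suc n')\<^esub> inv\<^bsub>G (Suc n')\<^esub> c \<in> carrier (G (Suc n'))" using g0 c nn by simp
    have "\<eta> n t = F n' (Suc n') (umor G oplus n' (Suc n') g0) x"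
      unfolding x_def jC using gen_factor[OF S R jC2(1) le, of g0] g0 nn by simp
    also have "\<dots> = F (Suc n') (Suc n') (umor G oplus (Suc n') (Suc n') (g0 \<otimes>\<^bsub>G (Suc n')\<^esub> inv\<^bsub>G (Suc n')\<^esub> c))
        (F n' (Suc n') (id_oplus_iota1 G oplus b (Suc n')) x)"
      by (rule sigma_b[OF S W c _ x]) (use g0 nn in simp)
    finally have e: "\<eta> n t = \<dots>" .
    have l1: "linear_map R (V (Suc n')) (V (Suc n')) (F (Suc n') (Suc n') (umor G oplus (Suc n') (Suc n') (g0 \<otimes>\<^bsub>G (Suc n')\<^esub> inv\<^bsub>G (Suc n')\<^esub> c)))"
      by (rule mf_lin[OF MF umor_in_uhom[where G=G and oplus=oplus and n="Suc n'", OF _ gi]]) simp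
    have l2: "linear_map R (V n') (V (Suc n')) (F n' (Suc n') (id_oplus_iota1 G oplus b (Suc n')))"
      by (rule mf_lin[OF MF iota_hom])
    have "cc t \<odot>\<^bsub>V n\<^esub> \<eta> n t = F (Suc n') (Suc n') (umor G oplus (Suc n') (Suc n') (g0 \<otimes>\<^bsub>G (Suc n')\<^esub> inv\<^bsub>G (Suc n')\<^esub> c))
        (F n' (Suc n') (id_oplus_iota1 G oplus b (Suc n')) (cc t \<odot>\<^bsub>V n'\<^esub> x))"
      using e nn lin_smult[OF l2 ct x] lin_smult[OF l1 ct lin_closed[OF l2 x]] by simp
    then show ?thesis using gi x lm_smult_closed[OF mf_lm[OF MF] ct x] nn by blast
  qed
  then obtain gf xf where gf: "\<And>t. t \<in> T \<Longrightarrow> gf t \<in> carrier (G n) \<and> xf t \<in> carrier (V n') \<and>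
      cc t \<odot>\<^bsub>V n\<^esub> \<eta> n t = F n n (umor G oplus n n (gf t)) (F n' n (id_oplus_iota1 G oplus b n) (xf t))"
    by metis
  obtain h where h: "bij_betw h {0..<card T} T" using ex_bij_betw_nat_finite[OF T(2)] by blast
  have hT: "h ` {..<card T} = T" and hi: "inj_on h {..<card T}" using h unfolding bij_betw_def atLeast0LessThan by auto
  have fc: "(\<lambda>t. cc t \<odot>\<^bsub>V n\<^esub> \<eta> n t) \<in> T \<rightarrow> carrier (V n)"
  proof
    fix t assume t: "t \<in> T"
    have "cc t \<in> carrier R" using T(4) t by auto
    moreover have "\<eta> n t \<in> carrier (V n)" using rn_img[OF R, of t n] t T(3) by blast
    ultimately show "cc t \<odot>\<^bsub>V n\<^esub> \<eta> n t \<in> carrier (V n)" by (rule lm_smult_closed[OF mf_lm[OF MF]])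
  qed
  have mem: "F n n (umor G oplus n n (gf (h i))) (F n' n (id_oplus_iota1 G oplus b n) (xf (h i))) \<in> carrier (V n)"
    if i: "i \<in> {..<card T}" for i
  proof -
    have hi': "h i \<in> T" using hT i by auto
    have mm: "cc (h i) \<odot>\<^bsub>V n\<^esub> \<eta> n (h i) \<in> carrier (V n)" using fc hi' by (rule funcset_mem)
    have eq: "cc (h i) \<odot>\<^bsub>V n\<^esub> \<eta> n (h i) = F n n (umor G oplus n n (gf (h i))) (F n' n (id_oplus_iota1 G oplus b n) (xf (h i)))"
      using gf[OF hi'] by (elim conjE)
    show ?thesis using mm unfolding eq .
  qed
  have "v = finsum (V n) (\<lambda>i. cc (h i) \<odot>\<^bsub>V n\<^esub> \<eta> n (h i)) {..<card T}"
  proof -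
    have "finsum (V n) (\<lambda>t. cc t \<odot>\<^bsub>V n\<^esub> \<eta> n t) (h ` {..<card T})
        = finsum (V n) (\<lambda>i. cc (h i) \<odot>\<^bsub>V n\<^esub> \<eta> n (h i)) {..<card T}"
      by (rule Vn.finsum_reindex) (use fc hi in \<open>simp_all add: hT\<close>)
    then show ?thesis unfolding hT T(1)[symmetric] .
  qed
  also have "\<dots> = finsum (V n) (\<lambda>i. F n n (umor G oplus n n (gf (h i))) (F n' n (id_oplus_iota1 G oplus b n) (xf (h i)))) {..<card T}"
  proof -
    have eqs: "cc (h i) \<odot>\<^bsub>V n\<^esub> \<eta> n (h i) = F n n (umor G oplus n n (gf (h i))) (F n' n (id_oplus_iota1 G oplus b n) (xf (h i)))"
      if "i \<in> {..<card T}" for i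
    proof -
      have "h i \<in> T" using hT that by auto
      then show ?thesis using gf by blast
    qed
    have mem2: "cc (h i) \<odot>\<^bsub>V n\<^esub> \<eta> n (h i) \<in> carrier (V n)" if "i \<in> {..<card T}" for i
    proof -
      have "h i \<in> T" using hT that by auto
      with fc show ?thesis by (rule funcset_mem)
    qed
    show ?thesis
      apply (rule Vn.finsum_cong)
        apply (rule refl)
       apply (rule eqTrueI, rule Pi_I, erule mem2)
      apply (unfold simp_implies_def)
      apply (erule eqs)
      done
  qed
  finally have vv: "v = finsum (V n) (\<lambda>i. F n n (umor G oplus n n (gf (h i))) (F (n - 1) n (id_oplus_iota1 G oplus b n) (xf (h i)))) {..<card T}"
    using nn by simp
  have all: "\<forall>i<card T. gf (h i) \<in> carrier (G n) \<and> xf (h i) \<in> carrier (V (n - 1))"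
  proof (intro allI impI)
    fix i assume "i < card T"
    then have "h i \<in> T" using hT by auto
    then show "gf (h i) \<in> carrier (G n) \<and> xf (h i) \<in> carrier (V (n - 1))" using gf nn by auto
  qed
  show ?thesis unfolding mod_sigma_image_def
    by (rule CollectI, rule exI[where x = "card T"], rule exI[where x = "\<lambda>i. gf (h i)"],
        rule exI[where x = "\<lambda>i. xf (h i)"]) (use vv all in blast)
qed

lemma mod_span:
  fixes V :: "nat \<Rightarrow> ('r, 'm) module" and G :: "nat \<Rightarrow> 'g monoid" and R :: "('r, 'z) ring_scheme"
  assumes B: "braided_stability_groupoid G oplus b" and MF: "mod_functor G oplus R V F"
    and H: "\<forall>n>d. carrier (V n) \<subseteq> mod_sigma_image G oplus b V F n"
  shows "carrier (V n) \<subseteq> lcomb R (V n) (\<lambda>t. F (fst (fst t)) n (snd t) (snd (fst t)))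
            (rep_basis G oplus {(m, x). m \<le> d \<and> x \<in> carrier (V m)} fst n)"
proof (induction n)
  have S: "stability_groupoid G oplus" using B unfolding braided_stability_groupoid_def by auto
  note W = mf_sf[OF MF]
  note RN = rep_nat_canon[OF W, of d]
  {
    fix n v assume n: "n \<le> d" and v: "v \<in> carrier (V n)"
    have img: "(\<lambda>t. F (fst (fst t)) n (snd t) (snd (fst t))) ` rep_basis G oplus {(m, x). m \<le> d \<and> x \<in> carrier (V m)} fst n \<subseteq> carrier (V n)"
      using RN unfolding rep_nat_def by simp
    have t: "((n, v), umor G oplus n n \<one>\<^bsub>G n\<^esub>) \<in> rep_basis G oplus {(m, x). m \<le> d \<and> x \<in> carrier (V m)} fst n"
      using n v sg_one_closed[OF S] umor_in_uhom[where G=G and oplus=oplus, of n n] unfolding rep_basis_def by auto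
    have "\<one>\<^bsub>R\<^esub> \<odot>\<^bsub>V n\<^esub> (\<lambda>t. F (fst (fst t)) n (snd t) (snd (fst t))) ((n, v), umor G oplus n n \<one>\<^bsub>G n\<^esub>)
       \<in> lcomb R (V n) (\<lambda>t. F (fst (fst t)) n (snd t) (snd (fst t)))
            (rep_basis G oplus {(m, x). m \<le> d \<and> x \<in> carrier (V m)} fst n)"
      by (rule lcomb_single[OF mf_lm[OF MF] img t]) (simp add: ring.ring_simprules(6)[OF lm_ring[OF mf_lm[OF MF]]])
    then have "v \<in> lcomb R (V n) (\<lambda>t. F (fst (fst t)) n (snd t) (snd (fst t)))
            (rep_basis G oplus {(m, x). m \<le> d \<and> x \<in> carrier (V m)} fst n)"
      using sf_id[OF W v] lm_one[OF mf_lm[OF MF] v] by simp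
  } note low = this
  case 0
  then show ?case using low by blast
next
  have S: "stability_groupoid G oplus" using B unfolding braided_stability_groupoid_def by auto
  note W = mf_sf[OF MF]
  note RN = rep_nat_canon[OF W, of d]
  case (Suc n)
  let ?B = "\<lambda>k. rep_basis G oplus {(m, x). m \<le> d \<and> x \<in> carrier (V m)} fst k"
  let ?e = "\<lambda>k t. F (fst (fst t)) k (snd t) (snd (fst t))"
  have img: "?e k ` ?B k \<subseteq> carrier (V k)" for k
    using RN unfolding rep_nat_def by simp
  show ?case
  proof
    fix v assume v: "v \<in> carrier (V (Suc n))"
    show "v \<in> lcomb R (V (Suc n)) (?e (Suc n)) (?B (Suc n))"
    proof (cases "Suc n \<le> d")
      case True
      have t: "((Suc n, v), umor G oplus (Suc n) (Suc n) \<one>\<^bsub>G (Suc n)\<^esub>) \<in> ?B (Suc n)"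
        using True v sg_one_closed[OF S] umor_in_uhom[where G=G and oplus=oplus, of "Suc n" "Suc n"] unfolding rep_basis_def by auto
      have "\<one>\<^bsub>R\<^esub> \<odot>\<^bsub>V (Suc n)\<^esub> ?e (Suc n) ((Suc n, v), umor G oplus (Suc n) (Suc n) \<one>\<^bsub>G (Suc n)\<^esub>)
         \<in> lcomb R (V (Suc n)) (?e (Suc n)) (?B (Suc n))"
        by (rule lcomb_single[OF mf_lm[OF MF] img t]) (simp add: ring.ring_simprules(6)[OF lm_ring[OF mf_lm[OF MF]]])
      then show ?thesis using sf_id[OF W v] lm_one[OF mf_lm[OF MF] v] by simp
    next
      case False
      obtain c where c: "c \<in> carrier (G (Suc n))" "id_oplus_iota1 G oplus b (Suc n) = umor G oplus n (Suc n) c"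
        using iota_rep[OF B] by blast
      have iota_hom: "id_oplus_iota1 G oplus b (Suc n) \<in> uhom G oplus n (Suc n)"
        using c umor_in_uhom[where G=G and oplus=oplus, of n "Suc n"] by simp
      have "v \<in> mod_sigma_image G oplus b V F (Suc n)" using H[rule_format, of "Suc n"] False v by auto
      then have "\<exists>(k::nat) g x. v = finsum (V (Suc n)) (\<lambda>i. F (Suc n) (Suc n) (umor G oplus (Suc n) (Suc n) (g i))
               (F n (Suc n) (id_oplus_iota1 G oplus b (Suc n)) (x i))) {..<k} \<and>
             (\<forall>i<k. g i \<in> carrier (G (Suc n)) \<and> x i \<in> carrier (V n))"
        unfolding mod_sigma_image_def by simp
      then obtain k :: nat and g x where gx: "\<forall>i<k. g i \<in> carrier (G (Suc n)) \<and> x i \<in> carrier (V n)"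
        "v = finsum (V (Suc n)) (\<lambda>i. F (Suc n) (Suc n) (umor G oplus (Suc n) (Suc n) (g i))
               (F n (Suc n) (id_oplus_iota1 G oplus b (Suc n)) (x i))) {..<k}"
        by blast
      have trm: "F (Suc n) (Suc n) (umor G oplus (Suc n) (Suc n) (g i))
               (F n (Suc n) (id_oplus_iota1 G oplus b (Suc n)) (x i)) \<in> lcomb R (V (Suc n)) (?e (Suc n)) (?B (Suc n))"
        if i: "i \<in> {..<k}" for i
      proof -
        have gi: "g i \<in> carrier (G (Suc n))" and xi: "x i \<in> carrier (V n)" using gx(1) i by auto
        let ?L = "\<lambda>y. F (Suc n) (Suc n) (umor G oplus (Suc n) (Suc n) (g i)) (F n (Suc n) (id_oplus_iota1 G oplus b (Suc n)) y)"
        have L: "linear_map R (V n) (V (Suc n)) ?L"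
          by (rule lin_comp[OF mf_lin[OF MF iota_hom] mf_lin[OF MF umor_in_uhom[where G=G and oplus=oplus and n="Suc n", OF _ gi]]]) simp
        have "x i \<in> lcomb R (V n) (?e n) (?B n)" using Suc.IH xi by blast
        then obtain T cc where T: "x i = finsum (V n) (\<lambda>t. cc t \<odot>\<^bsub>V n\<^esub> ?e n t) T" "finite T"
          "T \<subseteq> ?B n" "cc \<in> T \<rightarrow> carrier R"
          unfolding lcomb_def by blast
        have ft: "cc t \<odot>\<^bsub>V n\<^esub> ?e n t \<in> carrier (V n)" if "t \<in> T" for t
        proof -
          have "cc t \<in> carrier R" using T(4) that by (rule funcset_mem)
          moreover have "?e n t \<in> carrier (V n)" using img[of n] T(3) that by blast
          ultimately show ?thesis by (rule lm_smult_closed[OF mf_lm[OF MF]])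
        qed
        have "?L (x i) = finsum (V (Suc n)) (\<lambda>t. ?L (cc t \<odot>\<^bsub>V n\<^esub> ?e n t)) T"
          unfolding T(1) by (rule lin_finsum[OF mf_lm[OF MF] mf_lm[OF MF] L T(2)]) (use ft in blast)
        also have "\<dots> \<in> lcomb R (V (Suc n)) (?e (Suc n)) (?B (Suc n))"
        proof (rule lcomb_finsum[OF mf_lm[OF MF] img T(2)])
          fix t assume t: "t \<in> T"
          have ct: "cc t \<in> carrier R" using T(4) t by (rule funcset_mem)
          have et: "?e n t \<in> carrier (V n)" using img[of n] T(3) t by blast
          obtain t' where t': "t' \<in> ?B (Suc n)" "?L (?e n t) = ?e (Suc n) t'"
            using canon_lift[OF B W gi, of t d] T(3) t by blast
          have "?L (cc t \<odot>\<^bsub>V n\<^esub> ?e n t) = cc t \<odot>\<^bsub>V (Suc n)\<^esub> ?e (Suc n) t'"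
            using lin_smult[OF L ct et] t'(2) by simp
          also have "\<dots> \<in> lcomb R (V (Suc n)) (?e (Suc n)) (?B (Suc n))"
            by (rule lcomb_single[OF mf_lm[OF MF] img t'(1) ct])
          finally show "?L (cc t \<odot>\<^bsub>V n\<^esub> ?e n t) \<in> lcomb R (V (Suc n)) (?e (Suc n)) (?B (Suc n))" .
        qed
        finally show ?thesis .
      qed
      show ?thesis unfolding gx(2) by (rule lcomb_finsum[OF mf_lm[OF MF] img]) (use trm in auto)
    qed
  qed
qed

lemma mod_bwd:
  fixes V :: "nat \<Rightarrow> ('r, 'm) module" and G :: "nat \<Rightarrow> 'g monoid" and R :: "('r, 'z) ring_scheme"
  assumes B: "braided_stability_groupoid G oplus b" and MF: "mod_functor G oplus R V F"
    and H: "\<forall>n>d. carrier (V n) \<subseteq> mod_sigma_image G oplus b V F n"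
  shows "mod_generated_le G oplus R V F d"
  unfolding mod_generated_le_def
  apply (rule exI[where x = "{(m, x). m \<le> d \<and> x \<in> carrier (V m)}"])
  apply (rule exI[where x = fst])
  apply (rule exI[where x = "\<lambda>n t. F (fst (fst t)) n (snd t) (snd (fst t))"])
  apply (intro conjI allI)
    apply force
   apply (rule rep_nat_canon[OF mf_sf[OF MF], of d])
  apply (rule mod_span[OF B MF H, unfolded lcomb_def])
  done

theorem proposition5p4:
  fixes G :: "nat \<Rightarrow> 'g monoid"
    and oplus :: "nat \<Rightarrow> nat \<Rightarrow> 'g \<Rightarrow> 'g \<Rightarrow> 'g"
    and b :: "nat \<Rightarrow> nat \<Rightarrow> 'g"
    and d :: nat
  assumes "braided_stability_groupoid G oplus b"
  shows "(\<forall>(V :: nat \<Rightarrow> 'a set) F. set_functor G oplus V F \<longrightarrow>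
            (set_generated_le G oplus V F d \<longleftrightarrow>
             (\<forall>n>d. V n \<subseteq> set_sigma_image G oplus b V F n)))
       \<and> (\<forall>(R :: ('r, 'z) ring_scheme) (V :: nat \<Rightarrow> ('r, 'm) module) F. mod_functor G oplus R V F \<longrightarrow>
            (mod_generated_le G oplus R V F d \<longleftrightarrow>
             (\<forall>n>d. carrier (V n) \<subseteq> mod_sigma_image G oplus b V F n)))"
proof (rule conjI; intro allI impI)
  fix V :: "nat \<Rightarrow> 'a set" and F
  assume V: "set_functor G oplus V F"
  show "set_generated_le G oplus V F d \<longleftrightarrow> (\<forall>n>d. V n \<subseteq> set_sigma_image G oplus b V F n)"
  proof
  { assume "set_generated_le G oplus V F d"
    then show "\<forall>n>d. V n \<subseteq> set_sigma_image G oplus b V F n"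
      using set_fwd[OF assms V] by blast }
  { assume "\<forall>n>d. V n \<subseteq> set_sigma_image G oplus b V F n"
    then show "set_generated_le G oplus V F d" by (rule set_bwd[OF assms V]) }
  qed
next
  fix R :: "('r, 'z) ring_scheme" and V :: "nat \<Rightarrow> ('r, 'm) module" and F
  assume V: "mod_functor G oplus R V F"
  show "mod_generated_le G oplus R V F d \<longleftrightarrow> (\<forall>n>d. carrier (V n) \<subseteq> mod_sigma_image G oplus b V F n)"
  proof
  { assume "mod_generated_le G oplus R V F d"
    then show "\<forall>n>d. carrier (V n) \<subseteq> mod_sigma_image G oplus b V F n"
      using mod_fwd[OF assms V] by blast }
  { assume "\<forall>n>d. carrier (V n) \<subseteq> mod_sigma_image G oplus b V F n"
    then show "mod_generated_le G oplus R V F d" by (rule mod_bwd[OF assms V]) }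
  qed
qed

end
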